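(* Let $P$ be a shortest path (a path of minimum length between its two end vertices) in a honeycomb toroidal graph $\mathrm{HTG}(m,n,\ell)$, and let $0\le i\le m-2$. If $P$ contains two flat edges between column $i$ and column $i+1$ that are consecutive among the flat edges of $P$ between these two columns, then some jump edge of $P$ lies between them along $P$. In particular, if $P$ contains no jump edge, then $P$ contains at most one flat edge between column $i$ and column $i+1$, for each $i$.
   Context: Honeycomb toroidal graph: let $m\ge 1$ be an integer, $n\ge 4$ an even integer, and $\ell$ an integer with $\ell\equiv m \pmod 2$. The graph $\mathrm{HTG}(m,n,\ell)$ has vertex set $\{u_{i,j}: 0\le i\le m-1,\ j\in\mathbb{Z}_n\}$ (second subscripts are taken modulo $n$; the vertices $u_{i,0},\dots,u_{i,n-1}$ form column $i$) and the following edges: vertical edges $u_{i,j}u_{i,j+1}$ for all $0\le i\le m-1$ and all $j$; flat edges $u_{i,j}u_{i+1,j}$ for $0\le i\le m-2$ and all $j$ with $i+j$ odd; jump edges $u_{m-1,j}u_{0,j+\ell}$ for all $j$ with $j\equiv m\pmod 2$. Only parameters for which this is a simple 3-regular graph are allowed (in particular, when $m=1$ one requires $\ell\not\equiv\pm1\pmod n$). *)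

theory Defs
  imports Main
begin

text \<open>Vertex u_{i,j} is the pair (i,j) with i < m and j < n (j represents an element of Z_n).\<close>

type_synonym vtx = "nat \<times> nat"

definition htg_vert :: "nat \<Rightarrow> nat \<Rightarrow> vtx set" where
  "htg_vert m n = {(i, j). i < m \<and> j < n}"

definition vertical_dir :: "nat \<Rightarrow> vtx \<Rightarrow> vtx \<Rightarrow> bool" where
  "vertical_dir n u v \<longleftrightarrow> fst v = fst u \<and> snd v = (snd u + 1) mod n"

definition flat_dir :: "nat \<Rightarrow> vtx \<Rightarrow> vtx \<Rightarrow> bool" where
  "flat_dir m u v \<longleftrightarrow> fst u + 1 < m \<and> fst v = fst u + 1 \<and> snd v = snd u \<and> odd (fst u + snd u)"

definition jump_dir :: "nat \<Rightarrow> nat \<Rightarrow> int \<Rightarrow> vtx \<Rightarrow> vtx \<Rightarrow> bool" where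
  "jump_dir m n l u v \<longleftrightarrow> fst u = m - 1 \<and> fst v = 0 \<and> snd u mod 2 = m mod 2
      \<and> int (snd v) = (int (snd u) + l) mod int n"

definition htg_vertical_edge :: "nat \<Rightarrow> nat \<Rightarrow> vtx \<Rightarrow> vtx \<Rightarrow> bool" where
  "htg_vertical_edge m n u v \<longleftrightarrow> u \<in> htg_vert m n \<and> v \<in> htg_vert m n \<and>
      (vertical_dir n u v \<or> vertical_dir n v u)"

definition htg_flat_edge :: "nat \<Rightarrow> nat \<Rightarrow> vtx \<Rightarrow> vtx \<Rightarrow> bool" where
  "htg_flat_edge m n u v \<longleftrightarrow> u \<in> htg_vert m n \<and> v \<in> htg_vert m n \<and>
      (flat_dir m u v \<or> flat_dir m v u)"

definition htg_jump_edge :: "nat \<Rightarrow> nat \<Rightarrow> int \<Rightarrow> vtx \<Rightarrow> vtx \<Rightarrow> bool" where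
  "htg_jump_edge m n l u v \<longleftrightarrow> u \<in> htg_vert m n \<and> v \<in> htg_vert m n \<and>
      (jump_dir m n l u v \<or> jump_dir m n l v u)"

definition htg_adj :: "nat \<Rightarrow> nat \<Rightarrow> int \<Rightarrow> vtx \<Rightarrow> vtx \<Rightarrow> bool" where
  "htg_adj m n l u v \<longleftrightarrow> htg_vertical_edge m n u v \<or> htg_flat_edge m n u v \<or> htg_jump_edge m n l u v"

text \<open>Admissible parameters (simple 3-regular graph).\<close>

definition htg_params :: "nat \<Rightarrow> nat \<Rightarrow> int \<Rightarrow> bool" where
  "htg_params m n l \<longleftrightarrow> m \<ge> 1 \<and> n \<ge> 4 \<and> even n \<and> l mod 2 = int m mod 2 \<and>
      (m = 1 \<longrightarrow> l mod int n \<noteq> 1 \<and> l mod int n \<noteq> int n - 1)"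

text \<open>A walk is a nonempty list of vertices with consecutive vertices adjacent;
  its length is the number of edges, i.e. length - 1.\<close>

definition htg_walk :: "nat \<Rightarrow> nat \<Rightarrow> int \<Rightarrow> vtx list \<Rightarrow> bool" where
  "htg_walk m n l W \<longleftrightarrow> W \<noteq> [] \<and> set W \<subseteq> htg_vert m n \<and>
      (\<forall>k. k + 1 < length W \<longrightarrow> htg_adj m n l (W ! k) (W ! (k + 1)))"

definition htg_path :: "nat \<Rightarrow> nat \<Rightarrow> int \<Rightarrow> vtx list \<Rightarrow> bool" where
  "htg_path m n l P \<longleftrightarrow> htg_walk m n l P \<and> distinct P"

definition htg_shortest_path :: "nat \<Rightarrow> nat \<Rightarrow> int \<Rightarrow> vtx list \<Rightarrow> bool" where
  "htg_shortest_path m n l P \<longleftrightarrow> htg_path m n l P \<and>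
      (\<forall>Q. htg_walk m n l Q \<and> hd Q = hd P \<and> last Q = last P \<longrightarrow> length P \<le> length Q)"

definition flat_between :: "nat \<Rightarrow> nat \<Rightarrow> nat \<Rightarrow> vtx list \<Rightarrow> nat \<Rightarrow> bool" where
  "flat_between m n i P k \<longleftrightarrow> k + 1 < length P \<and> htg_flat_edge m n (P ! k) (P ! (k + 1)) \<and>
      {fst (P ! k), fst (P ! (k + 1))} = {i, i + 1}"

definition jump_at :: "nat \<Rightarrow> nat \<Rightarrow> int \<Rightarrow> vtx list \<Rightarrow> nat \<Rightarrow> bool" where
  "jump_at m n l P k \<longleftrightarrow> k + 1 < length P \<and> htg_jump_edge m n l (P ! k) (P ! (k + 1))"

end

theory Submission imports Defs begin

lemma succ_rd: "successively (\<lambda>x y. x = y \<or> R x y) xs \<Longrightarrow> successively R (remdups_adj xs)"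
  by (induction xs rule: remdups_adj.induct) (auto simp: successively_Cons)

lemma walk_succ: "htg_walk m n l W \<longleftrightarrow> W \<noteq> [] \<and> set W \<subseteq> htg_vert m n \<and> successively (htg_adj m n l) W"
  unfolding htg_walk_def successively_conv_nth by simp

lemma edge_side:
  assumes "htg_adj m n l u v" "\<not> htg_jump_edge m n l u v"
    "\<not> (htg_flat_edge m n u v \<and> {fst u, fst v} = {i, i+1})"
  shows "fst u \<le> i \<longleftrightarrow> fst v \<le> i"
  using assms unfolding htg_adj_def htg_vertical_edge_def htg_flat_edge_def vertical_dir_def flat_dir_def
  by (auto simp: insert_commute)

lemma edge_proj:
  assumes "htg_adj m n l u v" "\<not> htg_jump_edge m n l u v" "c0 < m"
  shows "(c0, snd u) = (c0, snd v) \<or> htg_adj m n l (c0, snd u) (c0, snd v)"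
  using assms unfolding htg_adj_def htg_vertical_edge_def htg_flat_edge_def vertical_dir_def flat_dir_def htg_vert_def
  by auto

lemma core:
  assumes sp: "htg_shortest_path m n l P"
    and k12: "k1 < k2" and f1: "flat_between m n i P k1" and f2: "flat_between m n i P k2"
    and nf: "\<forall>k. k1 < k \<and> k < k2 \<longrightarrow> \<not> flat_between m n i P k"
    and nj: "\<forall>k. k1 < k \<and> k < k2 \<longrightarrow> \<not> jump_at m n l P k"
  shows False
proof -
  define A where "A = htg_adj m n l"
  define V where "V = htg_vert m n"
  have wP: "htg_walk m n l P" and short: "\<And>Q. htg_walk m n l Q \<Longrightarrow> hd Q = hd P \<Longrightarrow> last Q = last P \<Longrightarrow> length P \<le> length Q"
    using sp unfolding htg_shortest_path_def htg_path_def by auto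
  have Pne: "P \<noteq> []" and PV: "set P \<subseteq> V" and sP: "successively A P"
    using wP unfolding walk_succ A_def V_def by auto
  have adjP: "\<And>k. k + 1 < length P \<Longrightarrow> A (P ! k) (P ! (k+1))"
    using wP unfolding htg_walk_def A_def by auto
  have len: "k2 + 1 < length P" using f2 unfolding flat_between_def by auto
  have inV: "\<And>k. k < length P \<Longrightarrow> P ! k \<in> V" using PV by (meson nth_mem subsetD)
  define c0 where "c0 = fst (P ! k1)"
  have fe1: "htg_flat_edge m n (P ! k1) (P ! (k1+1))" "{fst (P ! k1), fst (P ! (k1 + 1))} = {i, i + 1}"
    using f1 unfolding flat_between_def by auto
  have fe2: "htg_flat_edge m n (P ! k2) (P ! (k2+1))" "{fst (P ! k2), fst (P ! (k2 + 1))} = {i, i + 1}"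
    using f2 unfolding flat_between_def by auto
  have side: "\<And>k. k1 + 1 \<le> k \<Longrightarrow> k \<le> k2 \<Longrightarrow> (fst (P ! k) \<le> i \<longleftrightarrow> fst (P ! (k1+1)) \<le> i)"
  proof -
    fix k assume "k1 + 1 \<le> k" "k \<le> k2"
    then show "(fst (P ! k) \<le> i \<longleftrightarrow> fst (P ! (k1+1)) \<le> i)"
    proof (induction k rule: dec_induct)
      case base then show ?case by simp
    next
      case (step k)
      have "A (P ! k) (P ! (k+1))" using step len by (intro adjP) auto
      moreover have "\<not> htg_jump_edge m n l (P ! k) (P ! (k+1))"
        using nj step len unfolding jump_at_def by auto
      moreover have "\<not> (htg_flat_edge m n (P ! k) (P ! (k+1)) \<and> {fst (P ! k), fst (P ! (k+1))} = {i, i+1})"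
        using nf step len unfolding flat_between_def by auto
      ultimately have e: "fst (P ! k) \<le> i \<longleftrightarrow> fst (P ! (k+1)) \<le> i"
        unfolding A_def by (rule edge_side)
      have "k \<le> k2" using step.prems by simp
      then show ?case using e step.IH unfolding Suc_eq_plus1 by blast
    qed
  qed
  have "fst (P ! k2) \<le> i \<longleftrightarrow> fst (P ! (k1+1)) \<le> i" using k12 by (intro side) auto
  then have c2: "fst (P ! (k2+1)) = c0" using fe1(2) fe2(2) unfolding c0_def
    by (auto simp: doubleton_eq_iff)
  have c0m: "c0 < m" using inV[of k1] len k12 unfolding c0_def V_def htg_vert_def by auto
  have r1: "snd (P ! (k1+1)) = snd (P ! k1)" using fe1(1) unfolding htg_flat_edge_def flat_dir_def by auto
  have r2: "snd (P ! k2) = snd (P ! (k2+1))" using fe2(1) unfolding htg_flat_edge_def flat_dir_def by auto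
  define proj where "proj = (\<lambda>v::vtx. (c0, snd v))"
  define M where "M = drop (k1+1) (take (k2+1) P)"
  have lenM: "length M = k2 - k1" using len k12 unfolding M_def by auto
  have nthM: "\<And>j. j < length M \<Longrightarrow> M ! j = P ! (k1 + 1 + j)" unfolding M_def using len
    by (auto simp: lenM)
  have Mne: "M \<noteq> []" using lenM k12 by auto
  have hdM: "hd M = P ! (k1+1)" using nthM[of 0] Mne by (simp add: hd_conv_nth)
  have lastM: "last M = P ! k2" using nthM[of "length M - 1"] Mne lenM k12 by (simp add: last_conv_nth)
  define W where "W = remdups_adj (map proj M)"
  have Wne: "W \<noteq> []" using Mne unfolding W_def by simp
  have hdW: "hd W = P ! k1" unfolding W_def using Mne hdM r1
    by (simp add: hd_map proj_def c0_def)
  have lastW: "last W = P ! (k2+1)" unfolding W_def using Mne lastM r2 c2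
    by (simp add: last_map proj_def prod_eq_iff)
  have lenW: "length W \<le> k2 - k1" unfolding W_def using lenM
    by (metis length_map remdups_adj_length)
  have WV: "set W \<subseteq> V"
  proof
    fix x assume "x \<in> set W"
    then obtain v where "v \<in> set M" "x = proj v" unfolding W_def by auto
    then obtain j where "j < length M" "v = P ! (k1+1+j)" by (metis in_set_conv_nth nthM)
    then have "v \<in> V" using inV lenM len by auto
    then show "x \<in> V" using \<open>x = proj v\<close> c0m unfolding proj_def V_def htg_vert_def by auto
  qed
  have sW: "successively A W"
    unfolding W_def
  proof (rule succ_rd)
    show "successively (\<lambda>x y. x = y \<or> A x y) (map proj M)"
      unfolding successively_conv_nth
    proof (intro allI impI)
      fix j assume j: "Suc j < length (map proj M)"
      let ?k = "k1 + 1 + j"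
      have kk: "?k + 1 < length P" "k1 < ?k" "?k < k2" using j lenM len by auto
      have "A (P ! ?k) (P ! (?k+1))" using kk by (intro adjP) auto
      moreover have "\<not> htg_jump_edge m n l (P ! ?k) (P ! (?k+1))"
        using nj kk unfolding jump_at_def by auto
      ultimately have "proj (P ! ?k) = proj (P ! (?k+1)) \<or> A (proj (P ! ?k)) (proj (P ! (?k+1)))"
        unfolding A_def proj_def using edge_proj c0m by blast
      moreover have "M ! j = P ! ?k" "M ! Suc j = P ! (?k+1)" using nthM j by auto
      ultimately show "map proj M ! j = map proj M ! Suc j \<or> A (map proj M ! j) (map proj M ! Suc j)"
        using j by simp
    qed
  qed
  define Q where "Q = take k1 P @ W @ drop (k2+2) P"
  have sT: "successively A (take k1 P)" and sD: "successively A (drop (k2+2) P)"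
    using sP by (metis append_take_drop_id successively_append_iff)+
  have c1: "take k1 P = [] \<or> A (last (take k1 P)) (hd W)"
  proof (cases k1)
    case 0 then show ?thesis by simp
  next
    case (Suc k)
    then have "last (take k1 P) = P ! k" using len k12 by (simp add: take_Suc_conv_app_nth)
    then show ?thesis using hdW adjP[of k] Suc len k12 by auto
  qed
  have c3: "drop (k2+2) P = [] \<or> A (last W) (hd (drop (k2+2) P))"
  proof (cases "k2 + 2 < length P")
    case True
    then have "hd (drop (k2+2) P) = P ! (k2+2)" by (simp add: hd_drop_conv_nth)
    then show ?thesis using lastW adjP[of "k2+1"] True by auto
  next
    case False then show ?thesis by simp
  qed
  have sQ: "successively A Q" unfolding Q_def
    using sT sD sW c1 c3 Wne by (auto simp: successively_append_iff)
  have QV: "set Q \<subseteq> V" unfolding Q_def using WV PV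
    using set_take_subset[of k1 P] set_drop_subset[of "k2+2" P] by auto
  have wQ: "htg_walk m n l Q" unfolding walk_succ using sQ QV Wne unfolding Q_def A_def V_def by auto
  have hdQ: "hd Q = hd P"
  proof (cases k1)
    case 0 then show ?thesis unfolding Q_def using hdW Wne Pne hd_conv_nth[OF Pne] by simp
  next
    case (Suc k) then show ?thesis unfolding Q_def using Pne by simp
  qed
  have lastQ: "last Q = last P"
  proof (cases "k2 + 2 < length P")
    case True then show ?thesis unfolding Q_def by simp
  next
    case False
    then have "length P = k2 + 2" using len by simp
    then have "last P = P ! (k2+1)" using Pne by (simp add: last_conv_nth)
    then show ?thesis unfolding Q_def using False lastW Wne by simp
  qed
  have "length Q < length P" unfolding Q_def using lenW len k12 by simp
  then show False using short[OF wQ hdQ lastQ] by simp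
qed

theorem lemma6p2:
  fixes m n :: nat and l :: int and P :: "vtx list" and i :: nat
  assumes "htg_params m n l"
    and "htg_shortest_path m n l P"
    and "i + 2 \<le> m"
  shows "(\<forall>k1 k2. k1 < k2 \<and> flat_between m n i P k1 \<and> flat_between m n i P k2 \<and>
            (\<forall>k. k1 < k \<and> k < k2 \<longrightarrow> \<not> flat_between m n i P k)
          \<longrightarrow> (\<exists>k. k1 < k \<and> k < k2 \<and> jump_at m n l P k))
       \<and> ((\<forall>k. \<not> jump_at m n l P k) \<longrightarrow> card {k. flat_between m n i P k} \<le> 1)"
proof -
  have part1: "\<forall>k1 k2. k1 < k2 \<and> flat_between m n i P k1 \<and> flat_between m n i P k2 \<and>
            (\<forall>k. k1 < k \<and> k < k2 \<longrightarrow> \<not> flat_between m n i P k)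
          \<longrightarrow> (\<exists>k. k1 < k \<and> k < k2 \<and> jump_at m n l P k)"
    using core[OF assms(2)] by blast
  have part2: "card {k. flat_between m n i P k} \<le> 1" if nj: "\<forall>k. \<not> jump_at m n l P k"
  proof (rule ccontr)
    define S where "S = {k. flat_between m n i P k}"
    assume "\<not> card {k. flat_between m n i P k} \<le> 1"
    then have c: "card S \<ge> 2" unfolding S_def by simp
    have fin: "finite S" unfolding S_def flat_between_def
      by (rule finite_subset[of _ "{..<length P}"]) auto
    have Sne: "S \<noteq> {}" using c by auto
    define k1 where "k1 = Min S"
    have k1S: "k1 \<in> S" unfolding k1_def using fin Sne by simp
    define S' where "S' = {k \<in> S. k1 < k}"
    have "S - {k1} \<noteq> {}" using c fin k1S
      by (metis card.remove card_1_singletonE Diff_empty not_less_eq_eq numeral_2_eq_2 one_le_numeral card.empty le_zero_eq nat.distinct(1) not_one_le_zero)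
    then obtain x where x: "x \<in> S" "x \<noteq> k1" by auto
    have "k1 \<le> x" unfolding k1_def using fin x by simp
    then have S'ne: "S' \<noteq> {}" using x unfolding S'_def by auto
    have finS': "finite S'" using fin unfolding S'_def by simp
    define k2 where "k2 = Min S'"
    have k2S': "k2 \<in> S'" unfolding k2_def using finS' S'ne by simp
    have btw: "\<forall>k. k1 < k \<and> k < k2 \<longrightarrow> \<not> flat_between m n i P k"
    proof (intro allI impI notI)
      fix k assume "k1 < k \<and> k < k2" "flat_between m n i P k"
      then have "k \<in> S'" unfolding S'_def S_def by auto
      then have "k2 \<le> k" unfolding k2_def using finS' by simp
      then show False using \<open>k1 < k \<and> k < k2\<close> by simp
    qed
    have "k1 < k2" "flat_between m n i P k1" "flat_between m n i P k2"
      using k1S k2S' unfolding S'_def S_def by auto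
    then show False using part1 btw nj by blast
  qed
  show ?thesis using part1 part2 by blast
qed

end
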